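(* For every $\delta>0$ and $n\in\mathbb{N}$ there exists $N\in\mathbb{N}$ such that the following holds for every $N$-partitioned hypergraph $H$ and every choice of vertices $\gamma_{ik}\in V_{ik}$, $i<k$, $i,k\in[N]$, such that the degree of $\gamma_{ik}$ in every $(i,j,k)$-triad with $i<j<k$, $j\in[N]$, is at least $\delta$: there exist an induced $n$-partitioned subhypergraph $H'$ of $H$ with index set $I\subseteq[N]$ and vertices $\alpha_{ij},\beta_{ij}\in V_{ij}$, $i<j$, $i,j\in I$, such that $\{\alpha_{ij},\beta_{jk},\gamma_{ik}\}$ is an edge in the $(i,j,k)$-triad for all $i<j<k$, $i,j,k\in I$.
   Context: An $n$-partitioned hypergraph $H$ is a finite $3$-uniform hypergraph whose vertex set is partitioned into nonempty sets $V_{ij}$, $1\le i<j\le n$, such that every edge has, for some $1\le i<j<k\le n$, exactly one vertex in each of $V_{ij}$, $V_{ik}$, $V_{jk}$; the set of such edges is the $(i,j,k)$-triad. The degree of a vertex $v\in V_{ik}$ in the $(i,j,k)$-triad is the number of edges of that triad containing $v$ divided by $|V_{ij}||V_{jk}|$. For $I\subseteq[n]$, the induced subhypergraph with index set $I$ is the $|I|$-partitioned hypergraph with parts $V_{ij}$, $i<j$, $i,j\in I$ (indexed by elements of $I$) and all edges of $H$ contained in the union of these parts. *)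

theory Defs
  imports Complex_Main
begin

text \<open>An N-partitioned hypergraph is given by a family of parts V i j
  (only the pairs 1 \<le> i < j \<le> N are relevant) and a set E of edges
  (3-element vertex sets).  The vertex set is the union of the parts.\<close>

definition valid_pair :: "nat \<Rightarrow> nat \<Rightarrow> nat \<Rightarrow> bool" where
  "valid_pair N i j \<longleftrightarrow> 1 \<le> i \<and> i < j \<and> j \<le> N"

definition in_triad :: "(nat \<Rightarrow> nat \<Rightarrow> 'v set) \<Rightarrow> nat \<Rightarrow> nat \<Rightarrow> nat \<Rightarrow> 'v set \<Rightarrow> bool" where
  "in_triad V i j k e \<longleftrightarrow> (\<exists>a\<in>V i j. \<exists>b\<in>V i k. \<exists>c\<in>V j k. e = {a, b, c})"

definition partitioned_hypergraph ::
  "nat \<Rightarrow> (nat \<Rightarrow> nat \<Rightarrow> 'v set) \<Rightarrow> 'v set set \<Rightarrow> bool" where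
  "partitioned_hypergraph N V E \<longleftrightarrow>
     (\<forall>i j. valid_pair N i j \<longrightarrow> finite (V i j) \<and> V i j \<noteq> {}) \<and>
     (\<forall>i j i' j'. valid_pair N i j \<and> valid_pair N i' j' \<and> (i, j) \<noteq> (i', j')
         \<longrightarrow> V i j \<inter> V i' j' = {}) \<and>
     (\<forall>e\<in>E. \<exists>i j k. 1 \<le> i \<and> i < j \<and> j < k \<and> k \<le> N \<and> in_triad V i j k e)"

definition triad :: "(nat \<Rightarrow> nat \<Rightarrow> 'v set) \<Rightarrow> 'v set set \<Rightarrow> nat \<Rightarrow> nat \<Rightarrow> nat \<Rightarrow> 'v set set" where
  "triad V E i j k = {e \<in> E. in_triad V i j k e}"

definition triad_degree ::
  "(nat \<Rightarrow> nat \<Rightarrow> 'v set) \<Rightarrow> 'v set set \<Rightarrow> nat \<Rightarrow> nat \<Rightarrow> nat \<Rightarrow> 'v \<Rightarrow> real" where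
  "triad_degree V E i j k v =
     real (card {e \<in> triad V E i j k. v \<in> e}) / (real (card (V i j)) * real (card (V j k)))"

end

theory Submission imports Defs "HOL-Library.Ramsey" begin


lemma avg_exists:
  fixes g :: "'a \<Rightarrow> real" and c :: real
  assumes "finite Y" "Y \<noteq> {}" "c * card Y \<le> (\<Sum>y\<in>Y. g y)"
  shows "\<exists>y\<in>Y. c \<le> g y"
proof (rule ccontr)
  assume "\<not> ?thesis"
  then have "(\<Sum>y\<in>Y. g y) < (\<Sum>y\<in>Y. c)"
    using assms by (intro sum_strict_mono) auto
  then show False using assms by (simp add: mult.commute)
qed

lemma count_threshold:
  fixes g :: "'a \<Rightarrow> real" and c U :: real
  assumes "finite S" "c \<ge> 0" "\<And>s. s \<in> S \<Longrightarrow> g s \<le> U"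
    "c * card S \<le> (\<Sum>s\<in>S. g s)"
  shows "c / 2 * card S \<le> real (card {s\<in>S. c/2 \<le> g s}) * U"
proof -
  let ?B = "{s\<in>S. c/2 \<le> g s}" and ?Sm = "S - {s. c/2 \<le> g s}"
  have e: "S \<inter> {s. c/2 \<le> g s} = ?B" by auto
  have "(\<Sum>s\<in>S. g s) = (\<Sum>s\<in>?B. g s) + (\<Sum>s\<in>?Sm. g s)"
    using sum.Int_Diff[OF assms(1), of g "{s. c/2 \<le> g s}"] e by simp
  also have "(\<Sum>s\<in>?B. g s) \<le> (\<Sum>s\<in>?B. U)"
    using assms(3) by (intro sum_mono) auto
  also have "(\<Sum>s\<in>?Sm. g s) \<le> (\<Sum>s\<in>?Sm. c/2)"
    by (intro sum_mono) auto
  also have "(\<Sum>s\<in>?Sm. c/2) \<le> c/2 * card S"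
  proof -
    have "card ?Sm \<le> card S" using assms(1) by (intro card_mono) auto
    then have "real (card ?Sm) * (c/2) \<le> real (card S) * (c/2)"
      using assms(2) by (intro mult_right_mono) auto
    then show ?thesis by (simp add: mult.commute)
  qed
  finally show ?thesis using assms(4) by (simp add: algebra_simps)
qed

lemma pigeon:
  assumes "finite K" "finite T" "f ` K \<subseteq> T" "card T * n < card K"
  shows "\<exists>t\<in>T. n \<le> card {k\<in>K. f k = t}"
proof (rule ccontr)
  assume a: "\<not> ?thesis"
  have "card K = (\<Sum>t\<in>T. card {k\<in>K. f k = t})"
    using sum.group[OF assms(1) assms(2) assms(3), of "\<lambda>_. 1::nat"] by simp
  also have "\<dots> \<le> (\<Sum>t\<in>T. n)" using a by (intro sum_mono) auto
  finally show False using assms(4) by simp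
qed

lemma sorted_enum:
  fixes H :: "nat set"
  assumes "finite H"
  obtains f where "f ` {..<card H} = H" "\<And>a b. a < b \<Longrightarrow> b < card H \<Longrightarrow> f a < f b"
proof -
  let ?s = "sorted_list_of_set H"
  have "(!) ?s ` {..<card H} = H"
    using assms by (metis atLeast_upt length_sorted_list_of_set list.set_map map_nth set_sorted_list_of_set)
  moreover have "\<And>a b. a < b \<Longrightarrow> b < card H \<Longrightarrow> ?s ! a < ?s ! b"
    using assms by (metis length_sorted_list_of_set sorted_wrt_nth_less strict_sorted_list_of_set)
  ultimately show ?thesis using that by blast
qed

lemma ph_fin: "partitioned_hypergraph N V E \<Longrightarrow> 1 \<le> i \<Longrightarrow> i < j \<Longrightarrow> j \<le> N \<Longrightarrow> finite (V i j) \<and> V i j \<noteq> {}"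
  unfolding partitioned_hypergraph_def valid_pair_def by blast

lemma ph_disj: "partitioned_hypergraph N V E \<Longrightarrow> valid_pair N i j \<Longrightarrow> valid_pair N i' j' \<Longrightarrow> (i, j) \<noteq> (i', j') \<Longrightarrow> V i j \<inter> V i' j' = {}"
  unfolding partitioned_hypergraph_def by blast

lemma link_count:
  assumes PH: "partitioned_hypergraph N V E" and gam: "\<gamma> i k \<in> V i k"
    and deg: "\<delta> \<le> triad_degree V E i j k (\<gamma> i k)"
    and ijk: "1 \<le> i" "i < j" "j < k" "k \<le> N"
  shows "\<delta> * card (V i j) * card (V j k) \<le>
    (\<Sum>x\<in>V i j. \<Sum>y\<in>V j k. if {x, y, \<gamma> i k} \<in> triad V E i j k then 1 else 0 :: real)"
proof -
  let ?g = "\<gamma> i k"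
  let ?L = "{p \<in> V i j \<times> V j k. {fst p, snd p, ?g} \<in> triad V E i j k}"
  have f1: "finite (V i j)" "V i j \<noteq> {}" using ph_fin[OF PH, of i j] ijk by auto
  have f2: "finite (V j k)" "V j k \<noteq> {}" using ph_fin[OF PH, of j k] ijk by auto
  have d1: "V i j \<inter> V i k = {}" by (rule ph_disj[OF PH]) (use ijk in \<open>auto simp: valid_pair_def\<close>)
  have d2: "V j k \<inter> V i k = {}" by (rule ph_disj[OF PH]) (use ijk in \<open>auto simp: valid_pair_def\<close>)
  have sub: "{e \<in> triad V E i j k. ?g \<in> e} \<subseteq> (\<lambda>p. {fst p, snd p, ?g}) ` ?L"
  proof
    fix e assume e: "e \<in> {e \<in> triad V E i j k. ?g \<in> e}"
    then obtain a b c where abc: "a \<in> V i j" "b \<in> V i k" "c \<in> V j k" "e = {a, b, c}"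
      unfolding triad_def in_triad_def by blast
    have "?g \<noteq> a" using d1 abc gam by blast
    moreover have "?g \<noteq> c" using d2 abc gam by blast
    ultimately have "?g = b" using e abc by auto
    then have "e = {a, c, ?g}" using abc by auto
    then show "e \<in> (\<lambda>p. {fst p, snd p, ?g}) ` ?L"
      using e abc by (intro image_eqI[of _ _ "(a, c)"]) auto
  qed
  have finL: "finite ?L" using f1 f2 by simp
  have "card {e \<in> triad V E i j k. ?g \<in> e} \<le> card ?L"
    using card_mono[OF finite_imageI[OF finL] sub] card_image_le[OF finL, of "\<lambda>p. {fst p, snd p, ?g}"] by linarith
  moreover have "\<delta> * (real (card (V i j)) * real (card (V j k))) \<le> card {e \<in> triad V E i j k. ?g \<in> e}"
    using deg f1 f2 unfolding triad_degree_def by (simp add: pos_le_divide_eq card_gt_0_iff)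
  moreover have "real (card ?L) = (\<Sum>p\<in>V i j \<times> V j k. if {fst p, snd p, ?g} \<in> triad V E i j k then 1 else 0 :: real)"
    using sum.inter_filter[of "V i j \<times> V j k" "\<lambda>_. 1::real" "\<lambda>p. {fst p, snd p, ?g} \<in> triad V E i j k"] f1 f2
    by simp
  moreover have "\<dots> = (\<Sum>x\<in>V i j. \<Sum>y\<in>V j k. if {x, y, \<gamma> i k} \<in> triad V E i j k then 1 else 0 :: real)"
    by (simp add: sum.cartesian_product case_prod_beta)
  ultimately show ?thesis by (simp add: mult.assoc)
qed

lemma key:
  fixes \<delta> :: real
  assumes PH: "partitioned_hypergraph N V E"
    and gam: "\<forall>i k. valid_pair N i k \<longrightarrow> \<gamma> i k \<in> V i k"
    and deg: "\<forall>i j k. 1 \<le> i \<and> i < j \<and> j < k \<and> k \<le> N \<longrightarrow> triad_degree V E i j k (\<gamma> i k) \<ge> \<delta>"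
    and dpos: "\<delta> > 0"
    and Lft: "Lft \<subseteq> {1..<j}" "card Lft = M1" "M1 > 0"
    and Rgt: "Rgt \<subseteq> {j<..N}" "card Rgt = M2"
    and c1: "real n \<le> \<delta>^2/8 * M1"
    and c2: "real ((M1 choose n) * n) < \<delta>^2/8 * M2"
  shows "\<exists>A B x y. A \<subseteq> Lft \<and> B \<subseteq> Rgt \<and> card A = n \<and> card B = n \<and>
     (\<forall>i\<in>A. x i \<in> V i j) \<and> (\<forall>k\<in>B. y k \<in> V j k) \<and>
     (\<forall>i\<in>A. \<forall>k\<in>B. {x i, y k, \<gamma> i k} \<in> triad V E i j k)"
proof -
  have finL: "finite Lft" using Lft(1) finite_subset by blast
  have finR: "finite Rgt" using Rgt(1) finite_subset by blast
  have iL: "1 \<le> i \<and> i < j" if "i \<in> Lft" for i using Lft(1) that by auto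
  have kR: "j < k \<and> k \<le> N" if "k \<in> Rgt" for k using Rgt(1) that by auto
  have fV1: "finite (V i j) \<and> V i j \<noteq> {}" if "i \<in> Lft" "k \<in> Rgt" for i k
    using ph_fin[OF PH, of i j] iL[OF that(1)] kR[OF that(2)] by auto
  have fV2: "finite (V j k) \<and> V j k \<noteq> {}" if "i \<in> Lft" "k \<in> Rgt" for i k
    using ph_fin[OF PH, of j k] iL[OF that(1)] kR[OF that(2)] by auto
  define T where "T i k a b \<longleftrightarrow> {a, b, \<gamma> i k} \<in> triad V E i j k" for i k a b
  define cnt where "cnt i k b = (\<Sum>a\<in>V i j. if T i k a b then 1 else 0 :: real)" for i k b
  define rat where "rat i k b = cnt i k b / card (V i j)" for i k b
  have LC: "\<delta> * card (V i j) * card (V j k) \<le> (\<Sum>b\<in>V j k. cnt i k b)"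
    if "i \<in> Lft" "k \<in> Rgt" for i k
  proof -
    have "\<delta> * card (V i j) * card (V j k) \<le>
      (\<Sum>x\<in>V i j. \<Sum>y\<in>V j k. if {x, y, \<gamma> i k} \<in> triad V E i j k then 1 else 0 :: real)"
      using link_count[OF PH, of \<gamma> i k \<delta> j] gam deg iL[OF that(1)] kR[OF that(2)]
      by (auto simp: valid_pair_def)
    also have "\<dots> = (\<Sum>b\<in>V j k. cnt i k b)"
      unfolding cnt_def T_def by (rule sum.swap)
    finally show ?thesis .
  qed
  have cntle: "cnt i k b \<le> card (V i j)" for i k b
  proof -
    have "cnt i k b \<le> (\<Sum>a\<in>V i j. 1)" unfolding cnt_def by (intro sum_mono) auto
    then show ?thesis by simp
  qed
  have cntge: "0 \<le> cnt i k b" for i k b unfolding cnt_def by (intro sum_nonneg) auto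
  have "\<exists>b\<in>V j k. \<delta> * M1 \<le> (\<Sum>i\<in>Lft. rat i k b)" if k: "k \<in> Rgt" for k
  proof -
    have ne: "Lft \<noteq> {}" using Lft by auto
    then obtain i0 where i0: "i0 \<in> Lft" by blast
    have "(\<Sum>b\<in>V j k. \<Sum>i\<in>Lft. rat i k b) = (\<Sum>i\<in>Lft. (\<Sum>b\<in>V j k. cnt i k b) / card (V i j))"
      unfolding rat_def by (subst sum.swap) (simp add: sum_divide_distrib)
    also have "\<dots> \<ge> (\<Sum>i\<in>Lft. \<delta> * card (V j k))"
    proof (intro sum_mono)
      fix i assume i: "i \<in> Lft"
      have "card (V i j) > 0" using fV1[OF i k] by (simp add: card_gt_0_iff)
      then show "\<delta> * card (V j k) \<le> (\<Sum>b\<in>V j k. cnt i k b) / card (V i j)"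
        using LC[OF i k] by (simp add: pos_le_divide_eq algebra_simps)
    qed
    finally have "\<delta> * M1 * card (V j k) \<le> (\<Sum>b\<in>V j k. \<Sum>i\<in>Lft. rat i k b)"
      using Lft(2) by (simp add: mult_ac)
    then show ?thesis using avg_exists[of "V j k" "\<delta> * M1"] fV2[OF i0 k] by blast
  qed
  then have "\<forall>k\<in>Rgt. \<exists>b. b \<in> V j k \<and> \<delta> * M1 \<le> (\<Sum>i\<in>Lft. rat i k b)" by blast
  then have "\<exists>f. \<forall>k\<in>Rgt. f k \<in> V j k \<and> \<delta> * M1 \<le> (\<Sum>i\<in>Lft. rat i k (f k))" by (rule bchoice)
  then obtain y where y0: "\<forall>k\<in>Rgt. y k \<in> V j k \<and> \<delta> * M1 \<le> (\<Sum>i\<in>Lft. rat i k (y k))" ..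
  have y: "y k \<in> V j k \<and> \<delta> * M1 \<le> (\<Sum>i\<in>Lft. rat i k (y k))" if "k \<in> Rgt" for k
    using y0 that by (rule bspec)
  define G where "G k = {i\<in>Lft. \<delta>/2 \<le> rat i k (y k)}" for k
  have G: "\<delta>/2 * M1 \<le> card (G k)" if k: "k \<in> Rgt" for k
  proof -
    have "rat i k (y k) \<le> 1" if "i \<in> Lft" for i
      using cntle[of i k "y k"] fV1[OF that k] unfolding rat_def
      by (simp add: divide_le_eq_1 card_gt_0_iff)
    then have "\<delta>/2 * card Lft \<le> real (card {i\<in>Lft. \<delta>/2 \<le> rat i k (y k)}) * 1"
      using count_threshold[OF finL, of \<delta> "\<lambda>i. rat i k (y k)" 1] y[OF k] dpos Lft(2) by auto
    then show ?thesis unfolding G_def using Lft(2) by simp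
  qed
  have "\<exists>a\<in>V i j. \<delta>/2 * (\<Sum>k\<in>Rgt. if i \<in> G k then 1 else 0) \<le>
          (\<Sum>k\<in>Rgt. if i \<in> G k \<and> T i k a (y k) then 1 else 0 :: real)" if i: "i \<in> Lft" for i
  proof -
    have "M2 \<noteq> 0" using c2 of_nat_0_le_iff[of "(M1 choose n) * n"] by (cases "M2 = 0") (simp_all del: of_nat_mult)
    then have "Rgt \<noteq> {}" using Rgt(2) by auto
    then obtain k0 where k0: "k0 \<in> Rgt" by blast
    have "(\<Sum>a\<in>V i j. \<Sum>k\<in>Rgt. if i \<in> G k \<and> T i k a (y k) then 1 else 0 :: real)
        = (\<Sum>k\<in>Rgt. (if i \<in> G k then cnt i k (y k) else 0))"
      by (subst sum.swap) (auto simp: cnt_def intro!: sum.cong)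
    also have "\<dots> \<ge> (\<Sum>k\<in>Rgt. (if i \<in> G k then \<delta>/2 * card (V i j) else 0))"
    proof (intro sum_mono)
      fix k assume k: "k \<in> Rgt"
      have "card (V i j) > 0" using fV1[OF i k] by (simp add: card_gt_0_iff)
      then show "(if i \<in> G k then \<delta>/2 * card (V i j) else 0) \<le> (if i \<in> G k then cnt i k (y k) else 0)"
        unfolding G_def rat_def by (auto simp: pos_le_divide_eq)
    qed
    finally have cal: "(\<Sum>k\<in>Rgt. (if i \<in> G k then \<delta>/2 * card (V i j) else 0)) \<le>
       (\<Sum>a\<in>V i j. \<Sum>k\<in>Rgt. if i \<in> G k \<and> T i k a (y k) then 1 else 0 :: real)" .
    have "\<delta>/2 * (\<Sum>k\<in>Rgt. if i \<in> G k then 1 else 0) * card (V i j) =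
          (\<Sum>k\<in>Rgt. (if i \<in> G k then \<delta>/2 * card (V i j) else 0))"
    proof -
      have "(\<Sum>k\<in>Rgt. (if i \<in> G k then \<delta>/2 * card (V i j) else 0)) =
            (\<Sum>k\<in>Rgt. \<delta>/2 * (if i \<in> G k then 1 else 0) * card (V i j))"
        by (intro sum.cong) auto
      also have "\<dots> = \<delta>/2 * (\<Sum>k\<in>Rgt. if i \<in> G k then 1 else 0) * card (V i j)"
        by (simp only: sum_distrib_left[symmetric] sum_distrib_right[symmetric])
      finally show ?thesis by simp
    qed
    with cal have "\<delta>/2 * (\<Sum>k\<in>Rgt. if i \<in> G k then 1 else 0) * card (V i j) \<le>
       (\<Sum>a\<in>V i j. \<Sum>k\<in>Rgt. if i \<in> G k \<and> T i k a (y k) then 1 else 0 :: real)" by simp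
    then show ?thesis using avg_exists[of "V i j"] fV1[OF i k0] by blast
  qed
  then have "\<forall>i\<in>Lft. \<exists>a. a \<in> V i j \<and> \<delta>/2 * (\<Sum>k\<in>Rgt. if i \<in> G k then 1 else 0) \<le>
          (\<Sum>k\<in>Rgt. if i \<in> G k \<and> T i k a (y k) then 1 else 0 :: real)" by blast
  then have "\<exists>f. \<forall>i\<in>Lft. f i \<in> V i j \<and> \<delta>/2 * (\<Sum>k\<in>Rgt. if i \<in> G k then 1 else 0) \<le>
          (\<Sum>k\<in>Rgt. if i \<in> G k \<and> T i k (f i) (y k) then 1 else 0 :: real)" by (rule bchoice)
  then obtain x where x0: "\<forall>i\<in>Lft. x i \<in> V i j \<and> \<delta>/2 * (\<Sum>k\<in>Rgt. if i \<in> G k then 1 else 0) \<le>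
          (\<Sum>k\<in>Rgt. if i \<in> G k \<and> T i k (x i) (y k) then 1 else 0 :: real)" ..
  have x: "x i \<in> V i j \<and> \<delta>/2 * (\<Sum>k\<in>Rgt. if i \<in> G k then 1 else 0) \<le>
          (\<Sum>k\<in>Rgt. if i \<in> G k \<and> T i k (x i) (y k) then 1 else 0 :: real)" if "i \<in> Lft" for i
    using x0 that by (rule bspec)
  define Hk where "Hk k = {i\<in>Lft. i \<in> G k \<and> T i k (x i) (y k)}" for k
  have S3: "\<delta>^2/4 * M1 * M2 \<le> (\<Sum>k\<in>Rgt. real (card (Hk k)))"
  proof -
    have cG: "(\<Sum>i\<in>Lft. (\<Sum>k\<in>Rgt. if i \<in> G k then 1 else 0::real)) = (\<Sum>k\<in>Rgt. real (card (G k)))"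
    proof -
      have "(\<Sum>i\<in>Lft. (\<Sum>k\<in>Rgt. if i \<in> G k then 1 else 0::real)) = (\<Sum>k\<in>Rgt. \<Sum>i\<in>Lft. if i \<in> G k then 1 else 0)"
        by (rule sum.swap)
      also have "\<dots> = (\<Sum>k\<in>Rgt. real (card (G k)))"
      proof (intro sum.cong refl)
        fix k
        have "G k = {i\<in>Lft. i \<in> G k}" unfolding G_def by auto
        then show "(\<Sum>i\<in>Lft. if i \<in> G k then 1 else 0::real) = real (card (G k))"
          using finL sum.inter_filter[of Lft "\<lambda>_. 1::real" "\<lambda>i. i \<in> G k"] by simp
      qed
      finally show ?thesis .
    qed
    have "\<delta>^2/4 * M1 * M2 = \<delta>/2 * (\<Sum>k\<in>Rgt. \<delta>/2 * M1)"
      using Rgt(2) by (simp add: power2_eq_square)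
    also have "\<dots> \<le> \<delta>/2 * (\<Sum>k\<in>Rgt. real (card (G k)))"
      using G dpos by (intro mult_left_mono sum_mono) auto
    also have "\<dots> = (\<Sum>i\<in>Lft. \<delta>/2 * (\<Sum>k\<in>Rgt. if i \<in> G k then 1 else 0))"
      by (simp only: sum_distrib_left[symmetric] cG)
    also have "\<dots> \<le> (\<Sum>i\<in>Lft. \<Sum>k\<in>Rgt. if i \<in> G k \<and> T i k (x i) (y k) then 1 else 0 :: real)"
      by (intro sum_mono) (rule conjunct2[OF x])
    also have "\<dots> = (\<Sum>k\<in>Rgt. \<Sum>i\<in>Lft. if i \<in> G k \<and> T i k (x i) (y k) then 1 else 0 :: real)"
      by (rule sum.swap)
    also have "\<dots> = (\<Sum>k\<in>Rgt. real (card (Hk k)))"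
      unfolding Hk_def
    proof (intro sum.cong refl)
      fix k
      show "(\<Sum>i\<in>Lft. if i \<in> G k \<and> T i k (x i) (y k) then 1 else 0 :: real) =
            real (card {i\<in>Lft. i \<in> G k \<and> T i k (x i) (y k)})"
        using finL sum.inter_filter[of Lft "\<lambda>_. 1::real" "\<lambda>i. i \<in> G k \<and> T i k (x i) (y k)"] by simp
    qed
    finally show ?thesis .
  qed
  define K where "K = {k\<in>Rgt. \<delta>^2/4 * M1 / 2 \<le> real (card (Hk k))}"
  have "\<delta>^2/4 * M1 / 2 * card Rgt \<le> real (card K) * M1"
    unfolding K_def
  proof (rule count_threshold[OF finR])
    show "0 \<le> \<delta>^2/4 * M1" by simp
    show "real (card (Hk k)) \<le> real M1" if "k \<in> Rgt" for k
    proof -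
      have "card (Hk k) \<le> card Lft" unfolding Hk_def using finL by (intro card_mono) auto
      then show ?thesis using Lft(2) by simp
    qed
    show "\<delta>^2/4 * M1 * card Rgt \<le> (\<Sum>k\<in>Rgt. real (card (Hk k)))"
      using S3 Rgt(2) by simp
  qed
  then have cK: "\<delta>^2/8 * M2 \<le> card K" using Lft(3) Rgt(2) by (simp add: field_simps)
  have "\<exists>A. A \<subseteq> Hk k \<and> card A = n" if "k \<in> K" for k
  proof -
    have "real n \<le> card (Hk k)" using that c1 unfolding K_def by simp
    then show ?thesis using obtain_subset_with_card_n[of n "Hk k"] by (metis of_nat_le_iff)
  qed
  then obtain Af where Af: "\<And>k. k \<in> K \<Longrightarrow> Af k \<subseteq> Hk k \<and> card (Af k) = n" by metis
  have AfK: "Af ` K \<subseteq> nsets Lft n"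
    using Af unfolding nsets_def Hk_def by (auto intro: finite_subset[OF _ finL])
  have finK: "finite K" unfolding K_def using finR by simp
  have "card (nsets Lft n) * n < card K"
  proof -
    have "real ((M1 choose n) * n) < real (card K)" using c2 cK by linarith
    then show ?thesis using Lft(2) finL by (simp only: card_nsets of_nat_less_iff)
  qed
  then obtain A where A: "A \<in> nsets Lft n" "n \<le> card {k\<in>K. Af k = A}"
    using pigeon[OF finK finite_imp_finite_nsets[OF finL] AfK] by blast
  then obtain B where B: "B \<subseteq> {k\<in>K. Af k = A}" "card B = n"
    using obtain_subset_with_card_n by metis
  show ?thesis
  proof (intro exI conjI)
    show "A \<subseteq> Lft" "card A = n" using A(1) unfolding nsets_def by auto
    show "B \<subseteq> Rgt" using B unfolding K_def by auto
    show "card B = n" by fact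
    show "\<forall>i\<in>A. x i \<in> V i j" using x A(1) unfolding nsets_def by auto
    show "\<forall>k\<in>B. y k \<in> V j k" using y B unfolding K_def by auto
    show "\<forall>i\<in>A. \<forall>k\<in>B. {x i, y k, \<gamma> i k} \<in> triad V E i j k"
    proof (intro ballI)
      fix i k assume i: "i \<in> A" and k: "k \<in> B"
      then have "k \<in> K" "Af k = A" using B by auto
      then have "i \<in> Hk k" using Af i by auto
      then show "{x i, y k, \<gamma> i k} \<in> triad V E i j k" unfolding Hk_def T_def by auto
    qed
  qed
qed



lemma mono_inj:
  assumes "\<And>a b. a < b \<Longrightarrow> b < m \<Longrightarrow> (f::nat\<Rightarrow>nat) a < f b"
  shows "inj_on f {..<m}"
proof (rule inj_onI)
  fix a b assume "a \<in> {..<m}" "b \<in> {..<m}" "f a = f b"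
  then show "a = b" using assms[of a b] assms[of b a] by (cases a b rule: linorder_cases) auto
qed

lemma mono_less_iff:
  assumes "\<And>a b. a < b \<Longrightarrow> b < m \<Longrightarrow> (f::nat\<Rightarrow>nat) a < f b" "a < m" "b < m"
  shows "f a < f b \<longleftrightarrow> a < b"
  using assms(1)[of a b] assms(1)[of b a] assms(2,3) by (cases a b rule: linorder_cases) auto

theorem lemma4p6:
  fixes \<delta> :: real and n :: nat
  assumes "\<delta> > 0"
  shows "\<exists>N::nat. \<forall>(V :: nat \<Rightarrow> nat \<Rightarrow> 'v set) (E :: 'v set set) (\<gamma> :: nat \<Rightarrow> nat \<Rightarrow> 'v).
           partitioned_hypergraph N V E \<longrightarrow>
           (\<forall>i k. valid_pair N i k \<longrightarrow> \<gamma> i k \<in> V i k) \<longrightarrow>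
           (\<forall>i j k. 1 \<le> i \<and> i < j \<and> j < k \<and> k \<le> N \<longrightarrow> triad_degree V E i j k (\<gamma> i k) \<ge> \<delta>) \<longrightarrow>
           (\<exists>I \<subseteq> {1..N}. card I = n \<and>
              (\<exists>\<alpha> \<beta> :: nat \<Rightarrow> nat \<Rightarrow> 'v.
                 (\<forall>i\<in>I. \<forall>j\<in>I. i < j \<longrightarrow> \<alpha> i j \<in> V i j \<and> \<beta> i j \<in> V i j) \<and>
                 (\<forall>i\<in>I. \<forall>j\<in>I. \<forall>k\<in>I. i < j \<and> j < k \<longrightarrow>
                    {\<alpha> i j, \<beta> j k, \<gamma> i k} \<in> triad V E i j k)))"
proof -
  have d2: "\<delta>^2 > 0" using assms by simp
  define M1 :: nat where "M1 = nat \<lceil>8 * n / \<delta>^2\<rceil> + 1"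
  define M2 :: nat where "M2 = nat \<lceil>8 * ((M1 choose n) * n + 1) / \<delta>^2\<rceil> + 1"
  have M1pos: "M1 > 0" unfolding M1_def by simp
  have c1: "real n \<le> \<delta>^2/8 * M1"
  proof -
    have "8 * n / \<delta>^2 \<le> M1" unfolding M1_def by linarith
    then show ?thesis using d2 by (simp add: field_simps)
  qed
  have c2: "real ((M1 choose n) * n) < \<delta>^2/8 * M2"
  proof -
    have "8 * ((M1 choose n) * n + 1) / \<delta>^2 \<le> M2" unfolding M2_def by linarith
    then have "real ((M1 choose n) * n + 1) \<le> \<delta>^2/8 * M2" using d2 by (simp add: field_simps)
    then show ?thesis by simp
  qed
  define M where "M = M1 + 1 + M2"
  obtain N0 :: nat where R: "partn_lst {..<N0} [3*n, M] (2*n+1)" using ramsey_full[of "[3*n, M]" "2*n+1"] by blast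
  show ?thesis
  proof (rule exI[of _ N0], intro allI impI)
    fix V :: "nat \<Rightarrow> nat \<Rightarrow> 'v set" and E :: "'v set set" and \<gamma> :: "nat \<Rightarrow> nat \<Rightarrow> 'v"
    assume PH: "partitioned_hypergraph N0 V E"
      and gam: "\<forall>i k. valid_pair N0 i k \<longrightarrow> \<gamma> i k \<in> V i k"
      and deg: "\<forall>i j k. 1 \<le> i \<and> i < j \<and> j < k \<and> k \<le> N0 \<longrightarrow> triad_degree V E i j k (\<gamma> i k) \<ge> \<delta>"
    define Rb where "Rb X j x y \<longleftrightarrow> (\<forall>i\<in>X. i < j \<longrightarrow> x i \<in> V i j) \<and> (\<forall>k\<in>X. j < k \<longrightarrow> y k \<in> V j k) \<and>
        (\<forall>i\<in>X. \<forall>k\<in>X. i < j \<longrightarrow> j < k \<longrightarrow> {x i, y k, \<gamma> i k} \<in> triad V E i j k)" for X j x y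
    define Q where "Q X j \<longleftrightarrow> (\<exists>x y. Rb X j x y)" for X j
    have Qmono: "Q Y j" if q: "Q X j" and sub: "Y \<subseteq> X" for X Y j
    proof -
      obtain x y where "Rb X j x y" using q unfolding Q_def by blast
      then have "Rb Y j x y" using sub unfolding Rb_def by (meson subsetD)
      then show ?thesis unfolding Q_def by blast
    qed
    define good where "good X \<longleftrightarrow> (\<forall>j\<in>X. card {i\<in>X. i < j} = n \<longrightarrow> Q X j)" for X
    define col where "col X = (if good (Suc ` X) then 0 else 1::nat)" for X
    have colf: "col \<in> nsets {..<N0} (2*n+1) \<rightarrow> {..<length [3*n, M]}" unfolding col_def by auto
    obtain c Hs where c: "c < length [3*n, M]" and Hs: "Hs \<in> nsets {..<N0} ([3*n, M] ! c)"
      and hom: "col ` nsets Hs (2*n+1) \<subseteq> {c}"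
      using partn_lstE[OF R colf refl] by blast
    define H' where "H' = Suc ` Hs"
    have finHs: "finite Hs" and HsN: "Hs \<subseteq> {..<N0}" and cardHs: "card Hs = [3*n, M] ! c"
      using Hs unfolding nsets_def by auto
    have finH': "finite H'" unfolding H'_def using finHs by simp
    have H'N: "H' \<subseteq> {1..N0}" unfolding H'_def using HsN by auto
    have cardH': "card H' = card Hs" unfolding H'_def by (simp add: card_image)
    have GX: "good X' \<longleftrightarrow> c = 0" if "X' \<subseteq> H'" "card X' = 2*n+1" for X'
    proof -
      define X where "X = {h\<in>Hs. Suc h \<in> X'}"
      have XX: "Suc ` X = X'" unfolding X_def using that(1) unfolding H'_def by auto
      have "card X = card X'" using XX by (metis card_image inj_Suc inj_on_subset subset_UNIV)
      then have "X \<in> nsets Hs (2*n+1)" unfolding nsets_def X_def using that finHs by auto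
      then have "col X = c" using hom by auto
      then show ?thesis unfolding col_def XX using c by (auto split: if_splits)
    qed
    obtain f where f_img: "f ` {..<card H'} = H'" and f_mono: "\<And>a b. a < b \<Longrightarrow> b < card H' \<Longrightarrow> f a < f b"
      using sorted_enum[OF finH'] by blast
    have f_inj: "inj_on f {..<card H'}" by (rule mono_inj[OF f_mono])
    have fl: "f a < f b \<longleftrightarrow> a < b" if "a < card H'" "b < card H'" for a b
      by (rule mono_less_iff[OF f_mono that])
    show "\<exists>I\<subseteq>{1..N0}. card I = n \<and>
              (\<exists>\<alpha> \<beta> :: nat \<Rightarrow> nat \<Rightarrow> 'v.
                 (\<forall>i\<in>I. \<forall>j\<in>I. i < j \<longrightarrow> \<alpha> i j \<in> V i j \<and> \<beta> i j \<in> V i j) \<and>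
                 (\<forall>i\<in>I. \<forall>j\<in>I. \<forall>k\<in>I. i < j \<and> j < k \<longrightarrow>
                    {\<alpha> i j, \<beta> j k, \<gamma> i k} \<in> triad V E i j k))"
    proof (cases "c = 0")
      case True
      then have cH: "card H' = 3*n" using cardH' cardHs by simp
      define I where "I = f ` {n..<2*n}"
      have IH: "I \<subseteq> H'" unfolding I_def using f_img cH by auto
      have cardI: "card I = n" unfolding I_def using f_inj cH
        by (subst card_image) (auto intro: inj_on_subset)
      have QI: "Q I j" if j: "j \<in> I" for j
      proof -
        obtain t where t: "n \<le> t" "t < 2*n" "j = f t" using j unfolding I_def by auto
        define X' where "X' = f ` {t-n..t+n}"
        have X'H: "X' \<subseteq> H'" unfolding X'_def using f_img cH t by auto
        have cX': "card X' = 2*n+1" unfolding X'_def using f_inj cH t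
          by (subst card_image) (auto intro: inj_on_subset)
        have gX: "good X'" using GX[OF X'H cX'] True by simp
        have lt: "{i\<in>X'. i < j} = f ` {t-n..<t}"
        proof
          show "{i\<in>X'. i < j} \<subseteq> f ` {t-n..<t}"
          proof
            fix i assume "i \<in> {i\<in>X'. i < j}"
            then obtain a where a: "t-n \<le> a" "a \<le> t+n" "i = f a" "f a < f t" unfolding X'_def t(3) by auto
            then have "a < t" using fl[of a t] t cH by simp
            then show "i \<in> f ` {t-n..<t}" using a by auto
          qed
          show "f ` {t-n..<t} \<subseteq> {i\<in>X'. i < j}"
          proof
            fix i assume "i \<in> f ` {t-n..<t}"
            then obtain a where a: "t-n \<le> a" "a < t" "i = f a" by auto
            then have "f a < f t" using fl[of a t] t cH by simp
            then show "i \<in> {i\<in>X'. i < j}" using a unfolding X'_def t(3) by auto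
          qed
        qed
        have "card {i\<in>X'. i < j} = n" unfolding lt using f_inj cH t
          by (subst card_image) (auto intro: inj_on_subset)
        moreover have "j \<in> X'" unfolding X'_def t(3) using t by auto
        ultimately have "Q X' j" using gX unfolding good_def by simp
        moreover have "I \<subseteq> X'" unfolding I_def X'_def using t by auto
        ultimately show ?thesis by (rule Qmono)
      qed
      then have "\<forall>j\<in>I. \<exists>x y. Rb I j x y" unfolding Q_def by blast
      then have "\<exists>X. \<forall>j\<in>I. \<exists>y. Rb I j (X j) y" by (rule bchoice)
      then obtain X where "\<forall>j\<in>I. \<exists>y. Rb I j (X j) y" ..
      then have "\<exists>Y. \<forall>j\<in>I. Rb I j (X j) (Y j)" by (rule bchoice)
      then obtain Y where XY0: "\<forall>j\<in>I. Rb I j (X j) (Y j)" ..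
      have XY: "Rb I j (X j) (Y j)" if "j \<in> I" for j using XY0 that by (rule bspec)
      show ?thesis
      proof (intro exI conjI)
        show "I \<subseteq> {1..N0}" using IH H'N by auto
        show "card I = n" by fact
        show "\<forall>i\<in>I. \<forall>j\<in>I. i < j \<longrightarrow> (\<lambda>i j. X j i) i j \<in> V i j \<and> Y i j \<in> V i j"
        proof (intro ballI impI conjI)
          fix i j assume ij: "i \<in> I" "j \<in> I" "i < j"
          show "(\<lambda>i j. X j i) i j \<in> V i j" using XY[OF ij(2)] ij unfolding Rb_def by simp
          show "Y i j \<in> V i j" using XY[OF ij(1)] ij unfolding Rb_def by simp
        qed
        show "\<forall>i\<in>I. \<forall>j\<in>I. \<forall>k\<in>I. i < j \<and> j < k \<longrightarrow> {(\<lambda>i j. X j i) i j, Y j k, \<gamma> i k} \<in> triad V E i j k"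
        proof (intro ballI impI)
          fix i j k assume ijk: "i \<in> I" "j \<in> I" "k \<in> I" "i < j \<and> j < k"
          then show "{(\<lambda>i j. X j i) i j, Y j k, \<gamma> i k} \<in> triad V E i j k"
            using XY[OF ijk(2)] unfolding Rb_def by simp
        qed
      qed
    next
      case False
      then have c1': "c = 1" using c by simp
      then have cH: "card H' = M" using cardH' cardHs by simp
      define j where "j = f M1"
      define Lft where "Lft = f ` {..<M1}"
      define Rgt where "Rgt = f ` {M1<..<M}"
      have fH: "f a \<in> H'" if "a < M" for a using f_img cH that by auto
      have Lft1: "Lft \<subseteq> {1..<j}"
      proof
        fix i assume "i \<in> Lft"
        then obtain a where a: "a < M1" "i = f a" unfolding Lft_def by auto
        have "f a \<in> H'" using fH a M_def by simp
        then have "1 \<le> f a" using H'N by auto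
        moreover have "f a < f M1" using f_mono[of a M1] a cH M_def by simp
        ultimately show "i \<in> {1..<j}" using a unfolding j_def by simp
      qed
      have Lft2: "card Lft = M1" unfolding Lft_def using f_inj cH M_def
        by (subst card_image) (auto intro: inj_on_subset)
      have Rgt1: "Rgt \<subseteq> {j<..N0}"
      proof
        fix i assume "i \<in> Rgt"
        then obtain a where a: "M1 < a" "a < M" "i = f a" unfolding Rgt_def by auto
        have "f a \<in> H'" using fH a by simp
        then have "f a \<le> N0" using H'N by auto
        moreover have "f M1 < f a" using f_mono[of M1 a] a cH by simp
        ultimately show "i \<in> {j<..N0}" using a unfolding j_def by simp
      qed
      have Rgt2: "card Rgt = M2" unfolding Rgt_def using f_inj cH M_def
        by (subst card_image) (auto intro: inj_on_subset)
      obtain A B x y where AB: "A \<subseteq> Lft" "B \<subseteq> Rgt" "card A = n" "card B = n"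
        "\<forall>i\<in>A. x i \<in> V i j" "\<forall>k\<in>B. y k \<in> V j k"
        "\<forall>i\<in>A. \<forall>k\<in>B. {x i, y k, \<gamma> i k} \<in> triad V E i j k"
        using key[OF PH gam deg assms Lft1 Lft2 M1pos Rgt1 Rgt2 c1 c2] by blast
      define X' where "X' = A \<union> {j} \<union> B"
      have jH: "j \<in> H'" unfolding j_def using fH M_def by simp
      have X'H: "X' \<subseteq> H'" unfolding X'_def using AB(1,2) jH fH unfolding Lft_def Rgt_def M_def by auto
      have Aj: "\<forall>i\<in>A. i < j" and Bj: "\<forall>k\<in>B. j < k" using AB(1,2) Lft1 Rgt1 by auto
      have jA: "j \<notin> A" using Aj by blast
      have finA: "finite A" and finB: "finite B" using X'H finH' unfolding X'_def
        by (auto intro: finite_subset)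
      have cX': "card X' = 2*n+1"
      proof -
        have "card (A \<union> {j}) = n + 1" using finA jA AB(3) by simp
        moreover have "(A \<union> {j}) \<inter> B = {}" using Aj Bj by fastforce
        moreover have "card X' = card (A \<union> {j}) + card B" unfolding X'_def
          by (rule card_Un_disjoint) (use finA finB calculation(2) in auto)
        ultimately show ?thesis using AB(4) by simp
      qed
      have "good X'"
        unfolding good_def
      proof (intro ballI impI)
        fix j' assume j': "j' \<in> X'" and cj': "card {i\<in>X'. i < j'} = n"
        have "j' = j"
        proof (rule ccontr)
          assume ne: "j' \<noteq> j"
          show False
          proof (cases "j' \<in> A")
            case True
            have "{i\<in>X'. i < j'} \<subseteq> A - {j'}" unfolding X'_def using True Aj Bj by fastforce
            then have "card {i\<in>X'. i < j'} \<le> card (A - {j'})" using finA by (intro card_mono) auto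
            also have "\<dots> < n" using True finA AB(3) card_gt_0_iff[of A] by (auto simp: card_Diff_singleton)
            finally show False using cj' by simp
          next
            case False
            then have jB: "j' \<in> B" using j' ne unfolding X'_def by auto
            have "A \<union> {j} \<subseteq> {i\<in>X'. i < j'}" unfolding X'_def using jB Aj Bj by fastforce
            then have "card (A \<union> {j}) \<le> card {i\<in>X'. i < j'}"
              using finA finB unfolding X'_def by (intro card_mono) auto
            moreover have "card (A \<union> {j}) = n + 1" using finA jA AB(3) by simp
            ultimately show False using cj' by simp
          qed
        qed
        show "Q X' j'" unfolding Q_def Rb_def \<open>j' = j\<close>
        proof (intro exI conjI ballI impI)
          fix i assume "i \<in> X'" "i < j"
          then have "i \<in> A" unfolding X'_def using Bj by auto
          then show "x i \<in> V i j" using AB(5) by blast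
        next
          fix k assume "k \<in> X'" "j < k"
          then have "k \<in> B" unfolding X'_def using Aj by auto
          then show "y k \<in> V j k" using AB(6) by blast
        next
          fix i k assume "i \<in> X'" "k \<in> X'" "i < j" "j < k"
          then have "i \<in> A" "k \<in> B" unfolding X'_def using Aj Bj by auto
          then show "{x i, y k, \<gamma> i k} \<in> triad V E i j k" using AB(7) by blast
        qed
      qed
      then show ?thesis using GX[OF X'H cX'] False by simp
    qed
  qed
qed

end
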